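(* Let $(G,K)=(G_2,SU(3))$. For $X,Y\in\mathfrak g$, both $[\phi(X),\phi(Y)]=0$ and $[X_{\mathfrak k},Y_{\mathfrak k}]=0$ hold if and only if both $[X,Y]=0$ and $[X_{\mathfrak p},Y_{\mathfrak p}]=0$ hold.
   Context: $G_2=\operatorname{Aut}(\mathbb{O})\subseteq SO(7)$ is the automorphism group of the octonions acting on $\operatorname{Im}\mathbb{O}$, and $K=\{g\in G_2: g(i)=i\}\cong SU(3)$ for a fixed unit imaginary octonion $i$. Let $\mathfrak g$, $\mathfrak k$ be their Lie algebras, $\langle X,Y\rangle_0=-\operatorname{tr}(XY)$, $\mathfrak p$ the $\langle\cdot,\cdot\rangle_0$-orthogonal complement of $\mathfrak k$ in $\mathfrak g$, and $X=X_{\mathfrak k}+X_{\mathfrak p}$. Fix $t>0$ and set $\phi(Y)=\frac{t}{t+1}Y_{\mathfrak k}+Y_{\mathfrak p}$. *)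

theory Defs
  imports "HOL-Analysis.Analysis"
begin

text \<open>Imaginary octonions Im O = real^7, basis e_0..e_6 indexed by the ring Z/7 (type 7).
  Multiplication table (Cayley/Fano convention): e_a e_(a+1) = e_(a+3) for all a mod 7,
  i.e. the associative triples are the cyclic triples (a, a+1, a+3).
  oct_c i j k is the totally antisymmetric structure constant.\<close>

definition oct_c :: "7 \<Rightarrow> 7 \<Rightarrow> 7 \<Rightarrow> real" where
  "oct_c i j k =
     (if (j = i + 1 \<and> k = i + 3) \<or> (j = i + 2 \<and> k = i + 6) \<or> (j = i + 4 \<and> k = i + 5) then 1
      else if (j = i + 3 \<and> k = i + 1) \<or> (j = i + 6 \<and> k = i + 2) \<or> (j = i + 5 \<and> k = i + 4) then -1
      else 0)"

text \<open>Imaginary part of the product of two imaginary octonions (7-dimensional cross product).\<close>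
definition cross7 :: "real^7 \<Rightarrow> real^7 \<Rightarrow> real^7" where
  "cross7 u v = (\<chi> k. \<Sum>i\<in>UNIV. \<Sum>j\<in>UNIV. oct_c i j k * u $ i * v $ j)"

type_synonym octonion = "real \<times> (real^7)"

definition oct_mult :: "octonion \<Rightarrow> octonion \<Rightarrow> octonion" where
  "oct_mult x y = (fst x * fst y - inner (snd x) (snd y),
                   fst x *\<^sub>R snd y + fst y *\<^sub>R snd x + cross7 (snd x) (snd y))"

definition oct_add :: "octonion \<Rightarrow> octonion \<Rightarrow> octonion" where
  "oct_add x y = (fst x + fst y, snd x + snd y)"

definition ext_op :: "real^7^7 \<Rightarrow> octonion \<Rightarrow> octonion" where
  "ext_op X x = (0, X *v snd x)"

text \<open>The Lie algebra g = Lie(G_2) = Der(O), realised as matrices acting on Im O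
  (every derivation of O kills 1 and preserves Im O).\<close>
definition g2 :: "(real^7^7) set" where
  "g2 = {X. \<forall>x y. ext_op X (oct_mult x y) =
                   oct_add (oct_mult (ext_op X x) y) (oct_mult x (ext_op X y))}"

text \<open>Lie algebra of K = stabiliser of the unit imaginary octonion i.\<close>
definition k_alg :: "real^7 \<Rightarrow> (real^7^7) set" where
  "k_alg i = {X \<in> g2. X *v i = 0}"

definition ip0 :: "real^7^7 \<Rightarrow> real^7^7 \<Rightarrow> real" where
  "ip0 X Y = - trace (X ** Y)"

definition p_alg :: "real^7 \<Rightarrow> (real^7^7) set" where
  "p_alg i = {X \<in> g2. \<forall>Z \<in> k_alg i. ip0 X Z = 0}"

definition lie_br :: "real^7^7 \<Rightarrow> real^7^7 \<Rightarrow> real^7^7" where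
  "lie_br X Y = X ** Y - Y ** X"

definition proj_k :: "real^7 \<Rightarrow> real^7^7 \<Rightarrow> real^7^7" where
  "proj_k i X = (THE Z. Z \<in> k_alg i \<and> X - Z \<in> p_alg i)"

definition proj_p :: "real^7 \<Rightarrow> real^7^7 \<Rightarrow> real^7^7" where
  "proj_p i X = X - proj_k i X"

definition phi :: "real \<Rightarrow> real^7 \<Rightarrow> real^7^7 \<Rightarrow> real^7^7" where
  "phi t i Y = (t / (t + 1)) *\<^sub>R proj_k i Y + proj_p i Y"

end

theory Submission imports Defs begin

lemma UNIV7: "(UNIV::7 set) = {0,1,2,3,4,5,6}"
proof -
  have "x \<in> {0,1,2,3,4,5,6}" for x :: 7
  proof (cases x rule: bit1_cases)
    case (of_int z)
    have "z < 7" "0 \<le> z" using of_int by simp_all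
    then have "z = 0 \<or> z = 1 \<or> z = 2 \<or> z = 3 \<or> z = 4 \<or> z = 5 \<or> z = 6" by presburger
    then show ?thesis using of_int by auto
  qed
  thus ?thesis by auto
qed

lemma sum7: "(\<Sum>i\<in>(UNIV::7 set). f i) = f 0 + f 1 + f 2 + f 3 + f 4 + f 5 + f 6"
proof -
  have d: "(0::7) \<notin> {1,2,3,4,5,6}" "(1::7) \<notin> {2,3,4,5,6}" "(2::7) \<notin> {3,4,5,6}"
     "(3::7) \<notin> {4,5,6}" "(4::7) \<notin> {5,6}" "(5::7) \<notin> {6}" by simp_all
  show ?thesis unfolding UNIV7
    apply (subst sum.insert, rule finite.insertI, rule finite.insertI, rule finite.insertI, rule finite.insertI, rule finite.insertI, rule finite.insertI, rule finite.emptyI, rule d)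
    apply (subst sum.insert, rule finite.insertI, rule finite.insertI, rule finite.insertI, rule finite.insertI, rule finite.insertI, rule finite.emptyI, rule d)
    apply (subst sum.insert, rule finite.insertI, rule finite.insertI, rule finite.insertI, rule finite.insertI, rule finite.emptyI, rule d)
    apply (subst sum.insert, rule finite.insertI, rule finite.insertI, rule finite.insertI, rule finite.emptyI, rule d)
    apply (subst sum.insert, rule finite.insertI, rule finite.insertI, rule finite.emptyI, rule d)
    apply (subst sum.insert, rule finite.insertI, rule finite.emptyI, rule d)
    apply (subst sum.insert, rule finite.emptyI, simp)
    apply (simp only: sum.empty add.assoc add_0_right)
    done
qed

lemma all7: "(\<forall>k::7. P k) \<longleftrightarrow> P 0 \<and> P 1 \<and> P 2 \<and> P 3 \<and> P 4 \<and> P 5 \<and> P 6"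
proof -
  have "(\<forall>k::7. P k) \<longleftrightarrow> (\<forall>k\<in>(UNIV::7 set). P k)" by simp
  also have "\<dots> \<longleftrightarrow> P 0 \<and> P 1 \<and> P 2 \<and> P 3 \<and> P 4 \<and> P 5 \<and> P 6"
    unfolding UNIV7 by simp
  finally show ?thesis .
qed

lemma vec7_eq: "(u::real^7) = v \<longleftrightarrow> u$0 = v$0 \<and> u$1 = v$1 \<and> u$2 = v$2 \<and> u$3 = v$3 \<and> u$4 = v$4 \<and> u$5 = v$5 \<and> u$6 = v$6"
  by (simp add: vec_eq_iff all7)

lemma cx0: "cross7 u v $ 0 = u$1 * v$3 - u$3 * v$1 + u$2 * v$6 - u$6 * v$2 + u$4 * v$5 - u$5 * v$4"
  by (simp add: cross7_def sum7 oct_c_def)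
lemma cx1: "cross7 u v $ 1 = u$2 * v$4 - u$4 * v$2 + u$3 * v$0 - u$0 * v$3 + u$5 * v$6 - u$6 * v$5"
  by (simp add: cross7_def sum7 oct_c_def)
lemma cx2: "cross7 u v $ 2 = u$3 * v$5 - u$5 * v$3 + u$4 * v$1 - u$1 * v$4 + u$6 * v$0 - u$0 * v$6"
  by (simp add: cross7_def sum7 oct_c_def)
lemma cx3: "cross7 u v $ 3 = u$4 * v$6 - u$6 * v$4 + u$5 * v$2 - u$2 * v$5 + u$0 * v$1 - u$1 * v$0"
  by (simp add: cross7_def sum7 oct_c_def)
lemma cx4: "cross7 u v $ 4 = u$5 * v$0 - u$0 * v$5 + u$6 * v$3 - u$3 * v$6 + u$1 * v$2 - u$2 * v$1"
  by (simp add: cross7_def sum7 oct_c_def)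
lemma cx5: "cross7 u v $ 5 = u$6 * v$1 - u$1 * v$6 + u$0 * v$4 - u$4 * v$0 + u$2 * v$3 - u$3 * v$2"
  by (simp add: cross7_def sum7 oct_c_def)
lemma cx6: "cross7 u v $ 6 = u$0 * v$2 - u$2 * v$0 + u$1 * v$5 - u$5 * v$1 + u$3 * v$4 - u$4 * v$3"
  by (simp add: cross7_def sum7 oct_c_def)
lemmas cx = cx0 cx1 cx2 cx3 cx4 cx5 cx6

lemma inner7: "inner (u::real^7) v = u$0 * v$0 + u$1 * v$1 + u$2 * v$2 + u$3 * v$3 + u$4 * v$4 + u$5 * v$5 + u$6 * v$6"
  by (simp add: inner_vec_def sum7)

lemma mv7: "((X::real^7^7) *v v) $ k = X$k$0 * v$0 + X$k$1 * v$1 + X$k$2 * v$2 + X$k$3 * v$3 + X$k$4 * v$4 + X$k$5 * v$5 + X$k$6 * v$6"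
  by (simp add: matrix_vector_mult_def sum7)

lemma mm7: "((X::real^7^7) ** Y) $ r $ s = X$r$0 * Y$0$s + X$r$1 * Y$1$s + X$r$2 * Y$2$s + X$r$3 * Y$3$s + X$r$4 * Y$4$s + X$r$5 * Y$5$s + X$r$6 * Y$6$s"
  by (simp add: matrix_matrix_mult_def sum7)

lemma trace7: "trace (X::real^7^7) = X$0$0 + X$1$1 + X$2$2 + X$3$3 + X$4$4 + X$5$5 + X$6$6"
  by (simp add: trace_def sum7)

lemmas comps = cx inner7 vector_add_component vector_scaleR_component vector_minus_component real_scaleR_def vector_uminus_component zero_index

section \<open>Cross product identities\<close>

lemma cross_anti: "cross7 x y = - cross7 y x"
  by (simp only: vec7_eq comps) algebra

lemma cross_add1: "cross7 (x + y) z = cross7 x z + cross7 y z"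
  by (simp only: vec7_eq comps) algebra
lemma cross_add2: "cross7 z (x + y) = cross7 z x + cross7 z y"
  by (simp only: vec7_eq comps) algebra
lemma cross_diff1: "cross7 (x - y) z = cross7 x z - cross7 y z"
  by (simp only: vec7_eq comps) algebra
lemma cross_diff2: "cross7 z (x - y) = cross7 z x - cross7 z y"
  by (simp only: vec7_eq comps) algebra
lemma cross_scale1: "cross7 (c *\<^sub>R x) z = c *\<^sub>R cross7 x z"
  by (simp only: vec7_eq comps) algebra
lemma cross_scale2: "cross7 z (c *\<^sub>R x) = c *\<^sub>R cross7 z x"
  by (simp only: vec7_eq comps) algebra
lemma cross_zero1 [simp]: "cross7 0 z = 0"
  by (simp only: vec7_eq comps) algebra
lemma cross_zero2 [simp]: "cross7 z 0 = 0"
  by (simp only: vec7_eq comps) algebra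
lemma cross_self [simp]: "cross7 x x = 0"
  by (simp only: vec7_eq comps) algebra

lemma cross_triple: "inner (cross7 x y) z = inner x (cross7 y z)"
  by (simp only: comps) algebra

lemma cross_cross: "cross7 x (cross7 x y) = inner x y *\<^sub>R x - inner x x *\<^sub>R y"
  by (simp only: vec7_eq comps) algebra

lemma cross_norm: "inner (cross7 x y) (cross7 x y) = inner x x * inner y y - (inner x y)^2"
  by (simp only: comps power2_eq_square) algebra

lemma cross_inner_same: "inner (cross7 i p) (cross7 i q) = inner i i * inner p q - inner i p * inner i q"
  by (simp only: comps) algebra

lemma cross_orth1 [simp]: "inner (cross7 x y) x = 0"
  by (simp only: comps) algebra
lemma cross_orth2 [simp]: "inner (cross7 x y) y = 0"
  by (simp only: comps) algebra


section \<open>Characterisation of g2\<close>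

lemma axis_comp: "axis i (x::real) $ j = (if j = i then x else 0)"
  by (simp add: axis_def)

definition skew7 :: "real^7^7 \<Rightarrow> bool" where
  "skew7 X \<longleftrightarrow> (\<forall>u v. inner (X *v u) v + inner u (X *v v) = 0)"
definition der7 :: "real^7^7 \<Rightarrow> bool" where
  "der7 X \<longleftrightarrow> (\<forall>u v. X *v cross7 u v = cross7 (X *v u) v + cross7 u (X *v v))"

lemma g2_iff: "X \<in> g2 \<longleftrightarrow> skew7 X \<and> der7 X"
proof
  assume "X \<in> g2"
  then have H: "\<And>x y. ext_op X (oct_mult x y) = oct_add (oct_mult (ext_op X x) y) (oct_mult x (ext_op X y))"
    using \<open>X \<in> g2\<close> unfolding g2_def by blast
  have "inner (X *v u) v + inner u (X *v v) = 0 \<and> X *v cross7 u v = cross7 (X *v u) v + cross7 u (X *v v)" for u v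
    using H[of "(0,u)" "(0,v)"] by (simp add: ext_op_def oct_mult_def oct_add_def algebra_simps)
  then show "skew7 X \<and> der7 X" by (simp add: skew7_def der7_def)
next
  assume "skew7 X \<and> der7 X"
  then have S: "\<And>u v. inner (X *v u) v + inner u (X *v v) = 0"
    and D: "\<And>u v. X *v cross7 u v = cross7 (X *v u) v + cross7 u (X *v v)"
    by (auto simp: skew7_def der7_def)
  show "X \<in> g2"
    unfolding g2_def
  proof (intro CollectI allI)
    fix x y :: octonion
    obtain a u where x: "x = (a, u)" by (cases x)
    obtain b v where y: "y = (b, v)" by (cases y)
    have 1: "- inner (X *v u) v - inner u (X *v v) = 0" using S[of u v] by linarith
    show "ext_op X (oct_mult x y) = oct_add (oct_mult (ext_op X x) y) (oct_mult x (ext_op X y))"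
      using 1 D[of u v]
      by (simp add: x y ext_op_def oct_mult_def oct_add_def algebra_simps matrix_vector_mult_scaleR)
  qed
qed

lemma mv_axis: "((X::real^7^7) *v axis a 1) $ j = X $ j $ a"
proof -
  have "(X *v axis a 1) $ j = (\<Sum>k\<in>UNIV. X$j$k * (if k = a then 1 else 0))" by (simp add: matrix_vector_mult_def axis_def)
  also have "\<dots> = (\<Sum>k\<in>UNIV. if k = a then X$j$a else 0)" by (rule sum.cong) auto
  also have "\<dots> = X$j$a" by simp
  finally show ?thesis .
qed

lemma inner_axis7: "inner (axis a 1) (v::real^7) = v $ a" "inner v (axis a 1) = v $ a"
proof -
  have "inner (axis a 1) v = (\<Sum>k\<in>UNIV. (if k = a then 1 else 0) * v$k)" by (simp add: inner_vec_def axis_def)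
  also have "\<dots> = (\<Sum>k\<in>UNIV. if k = a then v$a else 0)" by (rule sum.cong) auto
  also have "\<dots> = v$a" by simp
  finally show "inner (axis a 1) (v::real^7) = v $ a" .
  then show "inner v (axis a 1) = v $ a" by (simp add: inner_commute)
qed

lemma g2_skew_ent: "X \<in> g2 \<Longrightarrow> X$a$b + X$b$a = 0"
proof -
  assume "X \<in> g2"
  then have "inner (X *v axis b 1) (axis a 1) + inner (axis b 1) (X *v axis a 1) = 0"
    by (simp add: g2_iff skew7_def)
  then show ?thesis by (simp add: inner_axis7 mv_axis)
qed

lemma g2_der_ent: "X \<in> g2 \<Longrightarrow> (X *v cross7 (axis a 1) (axis b 1)) $ k = (cross7 (X *v axis a 1) (axis b 1)) $ k + (cross7 (axis a 1) (X *v axis b 1)) $ k"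
  by (simp add: g2_iff der7_def)

lemma g2_entries:
  assumes "X \<in> g2"
  shows "X$0$0 = 0 \<and> X$0$1 = -X$5$2 + X$6$4 \<and> X$0$2 = X$4$3 + X$5$1 \<and> X$0$3 = -X$4$2 - X$6$5 \<and> X$0$4 = -X$4$0 \<and> X$0$5 = -X$5$0 \<and> X$0$6 = -X$6$0 \<and> X$1$1 = 0 \<and> X$1$2 = -X$5$0 - X$6$3 \<and> X$1$3 = X$5$4 + X$6$2 \<and> X$1$4 = -X$5$3 + X$6$0 \<and> X$1$5 = -X$5$1 \<and> X$1$6 = -X$6$1 \<and> X$2$2 = 0 \<and> X$2$3 = X$4$0 - X$6$1 \<and> X$2$4 = -X$4$2 \<and> X$2$5 = -X$5$2 \<and> X$2$6 = -X$6$2 \<and> X$3$3 = 0 \<and> X$3$4 = -X$4$3 \<and> X$3$5 = -X$5$3 \<and> X$3$6 = -X$6$3 \<and> X$4$4 = 0 \<and> X$4$5 = -X$5$4 \<and> X$4$6 = -X$6$4 \<and> X$5$5 = 0 \<and> X$5$6 = -X$6$5 \<and> X$6$6 = 0 \<and> X$1$0 = X$5$2 - X$6$4 \<and> X$2$0 = -X$4$3 - X$5$1 \<and> X$2$1 = X$5$0 + X$6$3 \<and> X$3$0 = X$4$2 + X$6$5 \<and> X$3$1 = -X$5$4 - X$6$2 \<and> X$3$2 = -X$4$0 + X$6$1 \<and> X$4$1 = X$5$3 - X$6$0"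
proof -
  have e0: "X$0$0 + X$0$0 = 0" using g2_skew_ent[OF assms, of 0 0] by simp
  have e1: "(X *v cross7 (axis 1 1) (axis 2 1)) $ 6 = (cross7 (X *v axis 1 1) (axis 2 1)) $ 6 + (cross7 (axis 1 1) (X *v axis 2 1)) $ 6"
    using g2_der_ent[OF assms, of 1 2 6] .
  have e2: "X$2$0 + X$0$2 = 0" using g2_skew_ent[OF assms, of 2 0] by simp
  have e3: "(X *v cross7 (axis 0 1) (axis 3 1)) $ 5 = (cross7 (X *v axis 0 1) (axis 3 1)) $ 5 + (cross7 (axis 0 1) (X *v axis 3 1)) $ 5"
    using g2_der_ent[OF assms, of 0 3 5] .
  have e4: "(X *v cross7 (axis 0 1) (axis 1 1)) $ 0 = (cross7 (X *v axis 0 1) (axis 1 1)) $ 0 + (cross7 (axis 0 1) (X *v axis 1 1)) $ 0"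
    using g2_der_ent[OF assms, of 0 1 0] .
  have e5: "(X *v cross7 (axis 0 1) (axis 4 1)) $ 6 = (cross7 (X *v axis 0 1) (axis 4 1)) $ 6 + (cross7 (axis 0 1) (X *v axis 4 1)) $ 6"
    using g2_der_ent[OF assms, of 0 4 6] .
  have e6: "(X *v cross7 (axis 1 1) (axis 2 1)) $ 2 = (cross7 (X *v axis 1 1) (axis 2 1)) $ 2 + (cross7 (axis 1 1) (X *v axis 2 1)) $ 2"
    using g2_der_ent[OF assms, of 1 2 2] .
  have e7: "X$4$0 + X$0$4 = 0" using g2_skew_ent[OF assms, of 4 0] by simp
  have e8: "(X *v cross7 (axis 0 1) (axis 4 1)) $ 0 = (cross7 (X *v axis 0 1) (axis 4 1)) $ 0 + (cross7 (axis 0 1) (X *v axis 4 1)) $ 0"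
    using g2_der_ent[OF assms, of 0 4 0] .
  have e9: "(X *v cross7 (axis 0 1) (axis 2 1)) $ 0 = (cross7 (X *v axis 0 1) (axis 2 1)) $ 0 + (cross7 (axis 0 1) (X *v axis 2 1)) $ 0"
    using g2_der_ent[OF assms, of 0 2 0] .
  have e10: "X$1$1 + X$1$1 = 0" using g2_skew_ent[OF assms, of 1 1] by simp
  have e11: "(X *v cross7 (axis 0 1) (axis 1 1)) $ 6 = (cross7 (X *v axis 0 1) (axis 1 1)) $ 6 + (cross7 (axis 0 1) (X *v axis 1 1)) $ 6"
    using g2_der_ent[OF assms, of 0 1 6] .
  have e12: "X$2$1 + X$1$2 = 0" using g2_skew_ent[OF assms, of 2 1] by simp
  have e13: "(X *v cross7 (axis 0 1) (axis 1 1)) $ 1 = (cross7 (X *v axis 0 1) (axis 1 1)) $ 1 + (cross7 (axis 0 1) (X *v axis 1 1)) $ 1"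
    using g2_der_ent[OF assms, of 0 1 1] .
  have e14: "(X *v cross7 (axis 1 1) (axis 2 1)) $ 5 = (cross7 (X *v axis 1 1) (axis 2 1)) $ 5 + (cross7 (axis 1 1) (X *v axis 2 1)) $ 5"
    using g2_der_ent[OF assms, of 1 2 5] .
  have e15: "(X *v cross7 (axis 0 1) (axis 3 1)) $ 4 = (cross7 (X *v axis 0 1) (axis 3 1)) $ 4 + (cross7 (axis 0 1) (X *v axis 3 1)) $ 4"
    using g2_der_ent[OF assms, of 0 3 4] .
  have e16: "(X *v cross7 (axis 1 1) (axis 2 1)) $ 1 = (cross7 (X *v axis 1 1) (axis 2 1)) $ 1 + (cross7 (axis 1 1) (X *v axis 2 1)) $ 1"
    using g2_der_ent[OF assms, of 1 2 1] .
  have e17: "(X *v cross7 (axis 0 1) (axis 4 1)) $ 1 = (cross7 (X *v axis 0 1) (axis 4 1)) $ 1 + (cross7 (axis 0 1) (X *v axis 4 1)) $ 1"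
    using g2_der_ent[OF assms, of 0 4 1] .
  have e18: "(X *v cross7 (axis 1 1) (axis 2 1)) $ 3 = (cross7 (X *v axis 1 1) (axis 2 1)) $ 3 + (cross7 (axis 1 1) (X *v axis 2 1)) $ 3"
    using g2_der_ent[OF assms, of 1 2 3] .
  have e19: "(X *v cross7 (axis 0 1) (axis 2 1)) $ 1 = (cross7 (X *v axis 0 1) (axis 2 1)) $ 1 + (cross7 (axis 0 1) (X *v axis 2 1)) $ 1"
    using g2_der_ent[OF assms, of 0 2 1] .
  have e20: "(X *v cross7 (axis 1 1) (axis 2 1)) $ 0 = (cross7 (X *v axis 1 1) (axis 2 1)) $ 0 + (cross7 (axis 1 1) (X *v axis 2 1)) $ 0"
    using g2_der_ent[OF assms, of 1 2 0] .
  have e21: "X$2$2 + X$2$2 = 0" using g2_skew_ent[OF assms, of 2 2] by simp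
  have e22: "(X *v cross7 (axis 0 1) (axis 3 1)) $ 6 = (cross7 (X *v axis 0 1) (axis 3 1)) $ 6 + (cross7 (axis 0 1) (X *v axis 3 1)) $ 6"
    using g2_der_ent[OF assms, of 0 3 6] .
  have e23: "X$1$0 + X$0$1 = 0" using g2_skew_ent[OF assms, of 1 0] by simp
  have e24: "(X *v cross7 (axis 0 1) (axis 4 1)) $ 2 = (cross7 (X *v axis 0 1) (axis 4 1)) $ 2 + (cross7 (axis 0 1) (X *v axis 4 1)) $ 2"
    using g2_der_ent[OF assms, of 0 4 2] .
  have e25: "(X *v cross7 (axis 0 1) (axis 2 1)) $ 2 = (cross7 (X *v axis 0 1) (axis 2 1)) $ 2 + (cross7 (axis 0 1) (X *v axis 2 1)) $ 2"
    using g2_der_ent[OF assms, of 0 2 2] .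
  have e26: "(X *v cross7 (axis 0 1) (axis 1 1)) $ 3 = (cross7 (X *v axis 0 1) (axis 1 1)) $ 3 + (cross7 (axis 0 1) (X *v axis 1 1)) $ 3"
    using g2_der_ent[OF assms, of 0 1 3] .
  have e27: "(X *v cross7 (axis 0 1) (axis 4 1)) $ 3 = (cross7 (X *v axis 0 1) (axis 4 1)) $ 3 + (cross7 (axis 0 1) (X *v axis 4 1)) $ 3"
    using g2_der_ent[OF assms, of 0 4 3] .
  have e28: "(X *v cross7 (axis 0 1) (axis 2 1)) $ 3 = (cross7 (X *v axis 0 1) (axis 2 1)) $ 3 + (cross7 (axis 0 1) (X *v axis 2 1)) $ 3"
    using g2_der_ent[OF assms, of 0 2 3] .
  have e29: "(X *v cross7 (axis 1 1) (axis 2 1)) $ 4 = (cross7 (X *v axis 1 1) (axis 2 1)) $ 4 + (cross7 (axis 1 1) (X *v axis 2 1)) $ 4"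
    using g2_der_ent[OF assms, of 1 2 4] .
  have e30: "(X *v cross7 (axis 0 1) (axis 4 1)) $ 4 = (cross7 (X *v axis 0 1) (axis 4 1)) $ 4 + (cross7 (axis 0 1) (X *v axis 4 1)) $ 4"
    using g2_der_ent[OF assms, of 0 4 4] .
  have e31: "(X *v cross7 (axis 0 1) (axis 6 1)) $ 5 = (cross7 (X *v axis 0 1) (axis 6 1)) $ 5 + (cross7 (axis 0 1) (X *v axis 6 1)) $ 5"
    using g2_der_ent[OF assms, of 0 6 5] .
  have e32: "(X *v cross7 (axis 0 1) (axis 4 1)) $ 5 = (cross7 (X *v axis 0 1) (axis 4 1)) $ 5 + (cross7 (axis 0 1) (X *v axis 4 1)) $ 5"
    using g2_der_ent[OF assms, of 0 4 5] .
  have e33: "(X *v cross7 (axis 0 1) (axis 2 1)) $ 5 = (cross7 (X *v axis 0 1) (axis 2 1)) $ 5 + (cross7 (axis 0 1) (X *v axis 2 1)) $ 5"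
    using g2_der_ent[OF assms, of 0 2 5] .
  have e34: "(X *v cross7 (axis 0 1) (axis 2 1)) $ 6 = (cross7 (X *v axis 0 1) (axis 2 1)) $ 6 + (cross7 (axis 0 1) (X *v axis 2 1)) $ 6"
    using g2_der_ent[OF assms, of 0 2 6] .
  have c0: "X$0$0 = 0" using e0 by (simp add: mv7 cx axis_comp, linarith?)
  have c1: "X$0$1 = -X$5$2 + X$6$4" using e1 by (simp add: mv7 cx axis_comp, linarith?)
  have c2: "X$0$2 = X$4$3 + X$5$1" using e2 e3 by (simp add: mv7 cx axis_comp, linarith?)
  have c3: "X$0$3 = -X$4$2 - X$6$5" using e4 e5 e6 by (simp add: mv7 cx axis_comp, linarith?)
  have c4: "X$0$4 = -X$4$0" using e7 by (simp add: mv7 cx axis_comp, linarith?)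
  have c5: "X$0$5 = -X$5$0" using e8 by (simp add: mv7 cx axis_comp, linarith?)
  have c6: "X$0$6 = -X$6$0" using e9 by (simp add: mv7 cx axis_comp, linarith?)
  have c7: "X$1$1 = 0" using e10 by (simp add: mv7 cx axis_comp, linarith?)
  have c8: "X$1$2 = -X$5$0 - X$6$3" using e11 e12 by (simp add: mv7 cx axis_comp, linarith?)
  have c9: "X$1$3 = X$5$4 + X$6$2" using e13 e14 by (simp add: mv7 cx axis_comp, linarith?)
  have c10: "X$1$4 = -X$5$3 + X$6$0" using e15 e16 by (simp add: mv7 cx axis_comp, linarith?)
  have c11: "X$1$5 = -X$5$1" using e2 e17 e18 by (simp add: mv7 cx axis_comp, linarith?)
  have c12: "X$1$6 = -X$6$1" using e19 e7 e20 by (simp add: mv7 cx axis_comp, linarith?)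
  have c13: "X$2$2 = 0" using e21 by (simp add: mv7 cx axis_comp, linarith?)
  have c14: "X$2$3 = X$4$0 - X$6$1" using e22 by (simp add: mv7 cx axis_comp, linarith?)
  have c15: "X$2$4 = -X$4$2" using e6 by (simp add: mv7 cx axis_comp, linarith?)
  have c16: "X$2$5 = -X$5$2" using e23 e24 e1 by (simp add: mv7 cx axis_comp, linarith?)
  have c17: "X$2$6 = -X$6$2" using e25 by (simp add: mv7 cx axis_comp, linarith?)
  have c18: "X$3$3 = 0" using e0 e26 e10 by (simp add: mv7 cx axis_comp, linarith?)
  have c19: "X$3$4 = -X$4$3" using e2 e3 e18 by (simp add: mv7 cx axis_comp, linarith?)
  have c20: "X$3$5 = -X$5$3" using e15 e27 e16 by (simp add: mv7 cx axis_comp, linarith?)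
  have c21: "X$3$6 = -X$6$3" using e11 e28 e12 by (simp add: mv7 cx axis_comp, linarith?)
  have c22: "X$4$4 = 0" using e10 e29 e21 by (simp add: mv7 cx axis_comp, linarith?)
  have c23: "X$4$5 = -X$5$4" using e30 by (simp add: mv7 cx axis_comp, linarith?)
  have c24: "X$4$6 = -X$6$4" using e23 e31 e1 by (simp add: mv7 cx axis_comp, linarith?)
  have c25: "X$5$5 = 0" using e0 e32 e10 e29 e21 by (simp add: mv7 cx axis_comp, linarith?)
  have c26: "X$5$6 = -X$6$5" using e33 e5 e6 by (simp add: mv7 cx axis_comp, linarith?)
  have c27: "X$6$6 = 0" using e0 e34 e21 by (simp add: mv7 cx axis_comp, linarith?)
  have c28: "X$1$0 = X$5$2 - X$6$4" using e23 e1 by (simp add: mv7 cx axis_comp, linarith?)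
  have c29: "X$2$0 = -X$4$3 - X$5$1" using e3 by (simp add: mv7 cx axis_comp, linarith?)
  have c30: "X$2$1 = X$5$0 + X$6$3" using e11 by (simp add: mv7 cx axis_comp, linarith?)
  have c31: "X$3$0 = X$4$2 + X$6$5" using e5 e6 by (simp add: mv7 cx axis_comp, linarith?)
  have c32: "X$3$1 = -X$5$4 - X$6$2" using e14 by (simp add: mv7 cx axis_comp, linarith?)
  have c33: "X$3$2 = -X$4$0 + X$6$1" using e7 e20 by (simp add: mv7 cx axis_comp, linarith?)
  have c34: "X$4$1 = X$5$3 - X$6$0" using e15 by (simp add: mv7 cx axis_comp, linarith?)
  show ?thesis using c0 c1 c2 c3 c4 c5 c6 c7 c8 c9 c10 c11 c12 c13 c14 c15 c16 c17 c18 c19 c20 c21 c22 c23 c24 c25 c26 c27 c28 c29 c30 c31 c32 c33 c34 by blast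
qed


section \<open>The derivations M(x,y)\<close>

definition Mf :: "real^7 \<Rightarrow> real^7 \<Rightarrow> real^7 \<Rightarrow> real^7" where
  "Mf x y z = cross7 (cross7 x y) z + (3 * inner x y) *\<^sub>R z - (3 * inner y z) *\<^sub>R x + 3 *\<^sub>R cross7 x (cross7 y z)"

lemma Mf_linear: "linear (Mf x y)"
proof (rule linearI)
  show "Mf x y (b1 + b2) = Mf x y b1 + Mf x y b2" for b1 b2
    unfolding Mf_def by (simp only: vec7_eq comps) algebra
  show "Mf x y (r *\<^sub>R b) = r *\<^sub>R Mf x y b" for r b
    unfolding Mf_def by (simp only: vec7_eq comps) algebra
qed

definition Mm :: "real^7 \<Rightarrow> real^7 \<Rightarrow> real^7^7" where
  "Mm x y = matrix (Mf x y)"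

lemma Mm_mv [simp]: "Mm x y *v z = Mf x y z"
  unfolding Mm_def using Mf_linear by (simp add: matrix_works linear_matrix_vector_mul_eq)

lemma Mm_ent: "Mm x y $ r $ s = Mf x y (axis s 1) $ r"
  by (simp add: Mm_def matrix_def)

lemma Mm_in_g2: "Mm x y \<in> g2"
  unfolding g2_iff skew7_def der7_def Mm_mv
proof (intro conjI allI)
  show "inner (Mf x y u) v + inner u (Mf x y v) = 0" for u v
    unfolding Mf_def by (simp only: comps) algebra
  show "Mf x y (cross7 u v) = cross7 (Mf x y u) v + cross7 u (Mf x y v)" for u v
    unfolding Mf_def by (simp only: vec7_eq comps) algebra
qed

lemma Mf_self: "Mf x y x = 4 *\<^sub>R (inner x x *\<^sub>R y - inner x y *\<^sub>R x)"
  unfolding Mf_def by (simp only: vec7_eq comps) algebra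

lemma Mf_kill: "Mf x (cross7 i x) i = (-4 * inner x i) *\<^sub>R cross7 x i"
  unfolding Mf_def by (simp only: vec7_eq comps) algebra

lemma Mf_scale2: "Mf x (c *\<^sub>R y) z = c *\<^sub>R Mf x y z"
  unfolding Mf_def by (simp only: vec7_eq comps) algebra

lemma Mm_scale2: "Mm x (c *\<^sub>R y) = c *\<^sub>R Mm x y"
  by (simp add: matrix_eq scaleR_matrix_vector_assoc[symmetric] Mf_scale2)

lemma TI:
  assumes "Z \<in> g2"
  shows "ip0 (Mm x y) Z = 12 * inner (Z *v x) y"
proof -
  note E = g2_entries[OF assms]
  show ?thesis
    unfolding ip0_def trace7 mm7 Mm_ent
    apply (simp only: E)
    apply (simp add: Mf_def comps axis_comp mv7 E)
    apply algebra
    done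
qed

lemma skew_inner: "X \<in> g2 \<Longrightarrow> inner (X *v u) v = - inner u (X *v v)"
  by (simp add: g2_iff skew7_def eq_neg_iff_add_eq_0)

lemma skew_self: "X \<in> g2 \<Longrightarrow> inner (X *v u) u = 0"
  using skew_inner[of X u u] by (simp add: inner_commute)

lemma der_app: "X \<in> g2 \<Longrightarrow> X *v cross7 u v = cross7 (X *v u) v + cross7 u (X *v v)"
  by (simp add: g2_iff der7_def)

lemma g2_add: "X \<in> g2 \<Longrightarrow> Y \<in> g2 \<Longrightarrow> X + Y \<in> g2"
  by (simp add: g2_iff skew7_def der7_def matrix_vector_mult_add_rdistrib inner_add_left inner_add_right cross_add1 cross_add2 algebra_simps)

lemma g2_scale: "X \<in> g2 \<Longrightarrow> c *\<^sub>R X \<in> g2"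
proof -
  assume X: "X \<in> g2"
  have m: "\<And>v. (c *\<^sub>R X) *v v = c *\<^sub>R (X *v v)" by (simp add: scaleR_matrix_vector_assoc)
  show ?thesis using X
    by (simp add: g2_iff skew7_def der7_def m cross_scale1 cross_scale2 algebra_simps)
       (metis distrib_left mult_zero_right)
qed

lemma g2_neg: "X \<in> g2 \<Longrightarrow> - X \<in> g2"
  using g2_scale[of X "-1"] by simp

lemma g2_diff: "X \<in> g2 \<Longrightarrow> Y \<in> g2 \<Longrightarrow> X - Y \<in> g2"
  using g2_add[of X "- Y"] g2_neg[of Y] by simp

lemma g2_zero: "0 \<in> g2"
  using g2_scale[OF Mm_in_g2, of 0] by simp

lemma mv_mm: "(X ** Y) *v u = X *v (Y *v u)"
  by (simp add: matrix_vector_mul_assoc)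

lemma lie_br_mv: "lie_br X Y *v u = X *v (Y *v u) - Y *v (X *v u)"
  by (simp add: lie_br_def matrix_vector_mult_diff_rdistrib mv_mm)

lemma g2_lie: assumes X: "X \<in> g2" and Y: "Y \<in> g2" shows "lie_br X Y \<in> g2"
  unfolding g2_iff skew7_def der7_def lie_br_mv
proof (intro conjI allI)
  fix u v
  show "inner (X *v (Y *v u) - Y *v (X *v u)) v + inner u (X *v (Y *v v) - Y *v (X *v v)) = 0"
    using skew_inner[OF X] skew_inner[OF Y] by (simp add: inner_diff_left inner_diff_right)
  show "X *v (Y *v cross7 u v) - Y *v (X *v cross7 u v) =
        cross7 (X *v (Y *v u) - Y *v (X *v u)) v + cross7 u (X *v (Y *v v) - Y *v (X *v v))"
    using der_app[OF X] der_app[OF Y]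
    by (simp add: matrix_vector_right_distrib cross_diff1 cross_diff2 algebra_simps)
qed

lemma k_iff: "Z \<in> k_alg i \<longleftrightarrow> Z \<in> g2 \<and> Z *v i = 0"
  by (simp add: k_alg_def)

lemma p_iff: "X \<in> p_alg i \<longleftrightarrow> X \<in> g2 \<and> (\<forall>Z\<in>k_alg i. ip0 X Z = 0)"
  by (simp add: p_alg_def)

lemma k_lie: "X \<in> k_alg i \<Longrightarrow> Y \<in> k_alg i \<Longrightarrow> lie_br X Y \<in> k_alg i"
  by (simp add: k_iff g2_lie lie_br_mv)

lemma k_diff: "X \<in> k_alg i \<Longrightarrow> Y \<in> k_alg i \<Longrightarrow> X - Y \<in> k_alg i"
  by (simp add: k_iff g2_diff matrix_vector_mult_diff_rdistrib)

section \<open>The form ip0\<close>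

lemma ip0_sum: "ip0 X Y = - (\<Sum>r\<in>UNIV. \<Sum>s\<in>UNIV. X$r$s * Y$s$r)"
  by (simp add: ip0_def trace_def matrix_matrix_mult_def)

lemma ip0_sym: "ip0 X Y = ip0 Y X"
  unfolding ip0_def by (metis trace_mul_sym)

lemma ip0_add_left: "ip0 (X + Y) Z = ip0 X Z + ip0 Y Z"
  by (simp add: ip0_sum sum.distrib algebra_simps)

lemma ip0_diff_left: "ip0 (X - Y) Z = ip0 X Z - ip0 Y Z"
  by (simp add: ip0_sum sum_subtractf algebra_simps)

lemma ip0_scale_left: "ip0 (c *\<^sub>R X) Z = c * ip0 X Z"
  by (simp add: ip0_sum sum_distrib_left algebra_simps)

lemma ip0_neg_left: "ip0 (- X) Z = - ip0 X Z"
  using ip0_scale_left[of "-1" X Z] by simp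

lemma mm_diff_left: "((A::real^7^7) - B) ** C = A ** C - B ** C"
  by (simp add: matrix_matrix_mult_def vec_eq_iff sum_subtractf algebra_simps)

lemma mm_diff_right: "(A::real^7^7) ** (B - C) = A ** B - A ** C"
  by (simp add: matrix_matrix_mult_def vec_eq_iff sum_subtractf algebra_simps)

lemma ip0_adinv: "ip0 (lie_br U V) Z = ip0 V (lie_br Z U)"
proof -
  have 1: "trace (U ** V ** Z) = trace (V ** (Z ** U))"
    by (metis matrix_mul_assoc trace_mul_sym)
  have 2: "trace (V ** U ** Z) = trace (V ** (U ** Z))"
    by (simp add: matrix_mul_assoc)
  show ?thesis
    unfolding ip0_def lie_br_def mm_diff_left mm_diff_right trace_sub using 1 2 by simp
qed

lemma ip0_self: assumes "X \<in> g2" shows "ip0 X X = (\<Sum>r\<in>UNIV. \<Sum>s\<in>UNIV. (X$r$s)^2)"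
proof -
  have h: "X$r$s * X$s$r = - ((X$r$s)^2)" for r s
  proof -
    have "X$s$r = - X$r$s" using g2_skew_ent[OF assms, of s r] by linarith
    then show ?thesis by (simp add: power2_eq_square)
  qed
  show ?thesis by (simp only: ip0_sum h sum_negf minus_minus)
qed

lemma ip0_self_zero: assumes "X \<in> g2" "ip0 X X = 0" shows "X = 0"
proof -
  have "(\<Sum>r\<in>UNIV. \<Sum>s\<in>UNIV. (X$r$s)^2) = 0" using assms ip0_self by simp
  then have "\<forall>r\<in>UNIV. (\<Sum>s\<in>UNIV. (X$r$s)^2) = 0"
    by (subst sum_nonneg_eq_0_iff[symmetric]) (auto intro: sum_nonneg)
  then have "\<forall>r s. (X$r$s)^2 = 0"
    by (simp add: sum_nonneg_eq_0_iff)
  then show ?thesis by (simp add: vec_eq_iff)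
qed

lemma ip0_bound: assumes "X \<in> g2" shows "inner (X *v w) (X *v w) \<le> ip0 X X * inner w w"
proof -
  have row: "(X *v w) $ r = inner (X $ r) w" for r
    by (simp add: matrix_vector_mult_def inner_vec_def)
  have "inner (X *v w) (X *v w) = (\<Sum>r\<in>UNIV. (inner (X $ r) w)^2)"
    by (simp add: inner_vec_def row power2_eq_square)
  also have "\<dots> \<le> (\<Sum>r\<in>UNIV. inner (X $ r) (X $ r) * inner w w)"
    by (rule sum_mono) (rule Cauchy_Schwarz_ineq)
  also have "\<dots> = ip0 X X * inner w w"
    by (simp add: ip0_self[OF assms] inner_vec_def power2_eq_square sum_distrib_right)
  finally show ?thesis .
qed


section \<open>The complement p and the projections\<close>

definition Tm :: "real^7 \<Rightarrow> real^7 \<Rightarrow> real^7^7" where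
  "Tm i a = (1/4) *\<^sub>R Mm i a"

lemma Tm_g2: "Tm i a \<in> g2"
  unfolding Tm_def by (rule g2_scale[OF Mm_in_g2])

lemma Tm_mv: "Tm i a *v z = (1/4) *\<^sub>R Mf i a z"
  by (simp add: Tm_def scaleR_matrix_vector_assoc[symmetric])

lemma Tm_i: assumes "inner i i = 1" "inner i a = 0" shows "Tm i a *v i = a"
  using assms by (simp add: Tm_mv Mf_self)

lemma Tm_scale: "Tm i (c *\<^sub>R a) = c *\<^sub>R Tm i a"
  by (simp add: Tm_def Mm_scale2)

lemma Tm_zero: "Tm i 0 = 0"
  using Tm_scale[of i 0 0] by simp

lemma ip0_Tm: assumes "Z \<in> g2" shows "ip0 (Tm i a) Z = 3 * inner (Z *v i) a"
  using TI[OF assms, of i a] by (simp add: Tm_def ip0_scale_left)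

lemma Tm_p: "Tm i a \<in> p_alg i"
  by (simp add: p_iff Tm_g2 ip0_Tm k_iff)

lemma p_diff: "X \<in> p_alg i \<Longrightarrow> Y \<in> p_alg i \<Longrightarrow> X - Y \<in> p_alg i"
  by (simp add: p_iff g2_diff ip0_diff_left)

lemma p_add: "X \<in> p_alg i \<Longrightarrow> Y \<in> p_alg i \<Longrightarrow> X + Y \<in> p_alg i"
  by (simp add: p_iff g2_add ip0_add_left)

lemma p_scale: "X \<in> p_alg i \<Longrightarrow> c *\<^sub>R X \<in> p_alg i"
  by (simp add: p_iff g2_scale ip0_scale_left)

lemma p_neg: "X \<in> p_alg i \<Longrightarrow> - X \<in> p_alg i"
  using p_scale[of X i "-1"] by simp

lemma kp_zero: "X \<in> k_alg i \<Longrightarrow> X \<in> p_alg i \<Longrightarrow> X = 0"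
  by (meson ip0_self_zero k_iff p_iff)

lemma perp_i: "X \<in> g2 \<Longrightarrow> inner (X *v i) i = 0"
  by (rule skew_self)

lemma p_rep: assumes i: "inner i i = 1" and u: "u \<in> p_alg i" shows "u = Tm i (u *v i)"
proof -
  have ug: "u \<in> g2" using u by (simp add: p_iff)
  have "inner i (u *v i) = 0" using perp_i[OF ug] by (simp add: inner_commute)
  then have ti: "Tm i (u *v i) *v i = u *v i" by (rule Tm_i[OF i])
  have "u - Tm i (u *v i) \<in> p_alg i" by (rule p_diff[OF u Tm_p])
  moreover have "u - Tm i (u *v i) \<in> k_alg i"
    using ti by (simp add: k_iff g2_diff[OF ug Tm_g2] matrix_vector_mult_diff_rdistrib)
  ultimately have "u - Tm i (u *v i) = 0" using kp_zero by blast
  then show ?thesis by simp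
qed

lemma proj_k_eq: assumes i: "inner i i = 1" and X: "X \<in> g2"
  shows "proj_k i X = X - Tm i (X *v i)"
  unfolding proj_k_def
proof (rule the_equality)
  have "inner i (X *v i) = 0" using perp_i[OF X] by (simp add: inner_commute)
  then have ti: "Tm i (X *v i) *v i = X *v i" by (rule Tm_i[OF i])
  have Kk: "X - Tm i (X *v i) \<in> k_alg i"
    using ti by (simp add: k_iff g2_diff[OF X Tm_g2] matrix_vector_mult_diff_rdistrib)
  show "X - Tm i (X *v i) \<in> k_alg i \<and> X - (X - Tm i (X *v i)) \<in> p_alg i"
    using Kk Tm_p by simp
  fix Z assume Z: "Z \<in> k_alg i \<and> X - Z \<in> p_alg i"
  have "Z - (X - Tm i (X *v i)) \<in> k_alg i" using Z Kk k_diff by blast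
  moreover have eq: "Z - (X - Tm i (X *v i)) = Tm i (X *v i) - (X - Z)" by simp
  have "Z - (X - Tm i (X *v i)) \<in> p_alg i" unfolding eq by (rule p_diff[OF Tm_p conjunct2[OF Z]])
  ultimately have "Z - (X - Tm i (X *v i)) = 0" using kp_zero by blast
  then show "Z = X - Tm i (X *v i)" by simp
qed

lemma proj_k_k: "inner i i = 1 \<Longrightarrow> X \<in> g2 \<Longrightarrow> proj_k i X \<in> k_alg i"
proof -
  assume i: "inner i i = 1" and X: "X \<in> g2"
  have "inner i (X *v i) = 0" using perp_i[OF X] by (simp add: inner_commute)
  then have ti: "Tm i (X *v i) *v i = X *v i" by (rule Tm_i[OF i])
  show ?thesis using ti by (simp add: proj_k_eq[OF i X] k_iff g2_diff[OF X Tm_g2] matrix_vector_mult_diff_rdistrib)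
qed

lemma proj_p_p: "inner i i = 1 \<Longrightarrow> X \<in> g2 \<Longrightarrow> proj_p i X \<in> p_alg i"
  by (simp add: proj_p_def proj_k_eq Tm_p)

lemma kp_lie: assumes Z: "Z \<in> k_alg i" and u: "u \<in> p_alg i" shows "lie_br Z u \<in> p_alg i"
proof -
  have g: "lie_br Z u \<in> g2" using Z u by (simp add: k_iff p_iff g2_lie)
  have "ip0 (lie_br Z u) W = 0" if W: "W \<in> k_alg i" for W
  proof -
    have "ip0 (lie_br Z u) W = ip0 u (lie_br W Z)" by (rule ip0_adinv)
    also have "\<dots> = 0" using u k_lie[OF W Z] by (simp add: p_iff)
    finally show ?thesis .
  qed
  then show ?thesis using g by (simp add: p_iff)
qed


lemma lie_br_scale_self: "lie_br X (c *\<^sub>R X) = 0"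
  by (simp add: lie_br_def vec_eq_iff matrix_matrix_mult_def sum_distrib_left algebra_simps)

lemma lie_br_zero_left: "lie_br 0 X = 0"
  by (simp add: lie_br_def)

lemma Mf_polar:
  "inner (Mf p q (x + y)) (cross7 i (x + y)) - inner (Mf p q (x - y)) (cross7 i (x - y))
   = 2 * (inner (Mf p q x) (cross7 i y) + inner (Mf p q y) (cross7 i x))"
proof -
  have l1: "Mf p q (x + y) = Mf p q x + Mf p q y" and l2: "Mf p q (x - y) = Mf p q x - Mf p q y"
    using Mf_linear[of p q] by (simp_all add: linear_add linear_diff)
  show ?thesis
    by (simp add: l1 l2 cross_add2 cross_diff2 inner_add_left inner_add_right inner_diff_left inner_diff_right algebra_simps)
qed

lemma key_G:
  assumes i: "inner i i = 1" and ai: "inner i a = 0" and bi: "inner i b = 0" and ab: "inner a b = 0"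
    and H: "\<And>x. inner x i = 0 \<Longrightarrow> inner (Mf a b x) (cross7 i x) = 0"
  shows "inner a a * inner b b = 0"
proof -
  define G where "G = inner a a * inner b b"
  define c where "c = cross7 i b"
  have ci: "inner (a + c) i = 0" "inner (a - c) i = 0"
  proof -
    have "inner a i = 0" using ai by (simp add: inner_commute)
    moreover have "inner c i = 0" unfolding c_def by (rule cross_orth1)
    ultimately show "inner (a + c) i = 0" "inner (a - c) i = 0"
      by (simp_all only: inner_add_left inner_diff_left)
  qed
  have "inner (Mf a b (a + c)) (cross7 i (a + c)) - inner (Mf a b (a - c)) (cross7 i (a - c)) = 0"
    using H[OF ci(1)] H[OF ci(2)] by simp
  then have 0: "inner (Mf a b a) (cross7 i c) + inner (Mf a b c) (cross7 i a) = 0"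
    by (simp add: Mf_polar)
  have icc: "cross7 i c = - b" using i bi by (simp add: c_def cross_cross)
  have Maa: "inner (Mf a b a) b = 4 * G"
    using ab by (simp add: Mf_self G_def inner_diff_left inner_commute)
  have t1: "inner (Mf a b a) (cross7 i c) = - 4 * G" using Maa icc by simp
  have Dg: "Mm a b \<in> g2" by (rule Mm_in_g2)
  have dc: "Mf a b c = cross7 (Mf a b i) b + cross7 i (Mf a b b)"
    using der_app[OF Dg, of i b] by (simp add: c_def)
  have sk: "inner (Mf a b b) a = - inner b (Mf a b a)"
    using skew_inner[OF Dg, of b a] by simp
  have t2: "inner (cross7 i (Mf a b b)) (cross7 i a) = - 4 * G"
    using sk Maa i ai by (simp add: cross_inner_same inner_commute)
  define w where "w = Mf a b i"
  have eq8: "inner (cross7 w b) (cross7 i a) = 8 * G"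
    using 0 t1 t2 dc by (simp add: w_def inner_add_left)
  have G0: "G \<ge> 0" by (simp add: G_def)
  have wb: "inner w w \<le> 48 * G"
  proof -
    have "inner w w \<le> ip0 (Mm a b) (Mm a b) * inner i i"
      using ip0_bound[OF Dg, of i] by (simp add: w_def)
    also have "\<dots> = 12 * inner (Mf a b a) b" using TI[OF Dg, of a b] i by simp
    finally show ?thesis using Maa by simp
  qed
  have cs: "(inner (cross7 w b) (cross7 i a))^2 \<le> inner (cross7 w b) (cross7 w b) * inner (cross7 i a) (cross7 i a)"
    by (rule Cauchy_Schwarz_ineq)
  have n1: "inner (cross7 w b) (cross7 w b) \<le> inner w w * inner b b"
    by (simp add: cross_norm)
  have n2: "inner (cross7 i a) (cross7 i a) = inner a a"
    using i ai by (simp add: cross_norm)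
  have bb: "inner b b \<ge> 0" "inner a a \<ge> 0" by simp_all
  have "(8 * G)^2 \<le> inner (cross7 w b) (cross7 w b) * inner a a" using cs eq8 n2 by simp
  also have "\<dots> \<le> inner w w * inner b b * inner a a" using n1 bb(2) by (rule mult_right_mono)
  also have "\<dots> \<le> 48 * G * inner b b * inner a a"
    using wb bb by (simp add: mult_right_mono)
  also have "\<dots> = 48 * G * G" by (simp add: G_def)
  finally have "64 * G * G \<le> 48 * G * G" by (simp add: power2_eq_square)
  then have "G * G \<le> 0" by linarith
  then have "G = 0" using G0 by (metis mult_eq_0_iff mult_le_0_iff order.antisym mult_nonneg_nonneg)
  then show ?thesis by (simp add: G_def)
qed


lemma key:
  assumes i: "inner i i = 1" and u: "u \<in> p_alg i" and v: "v \<in> p_alg i" and uv: "lie_br u v \<in> p_alg i"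
  shows "lie_br u v = 0"
proof -
  have ug: "u \<in> g2" and vg: "v \<in> g2" using u v by (simp_all add: p_iff)
  define a where "a = u *v i"
  define b where "b = v *v i"
  have ai: "inner i a = 0" using perp_i[OF ug] by (simp add: a_def inner_commute)
  have bi: "inner i b = 0" using perp_i[OF vg] by (simp add: b_def inner_commute)
  have ur: "u = Tm i a" using p_rep[OF i u] by (simp add: a_def)
  have vr: "v = Tm i b" using p_rep[OF i v] by (simp add: b_def)
  have orth: "inner (Z *v a) b = 0" if Z: "Z \<in> k_alg i" for Z
  proof -
    have Zg: "Z \<in> g2" and Zi: "Z *v i = 0" using Z by (simp_all add: k_iff)
    have 1: "ip0 (lie_br u v) Z = 0" using uv Z by (simp add: p_iff)
    have 2: "ip0 (lie_br u v) Z = ip0 v (lie_br Z u)" by (rule ip0_adinv)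
    have zp: "lie_br Z u \<in> p_alg i" by (rule kp_lie[OF Z u])
    have zg: "lie_br Z u \<in> g2" using zp by (simp add: p_iff)
    have zi: "lie_br Z u *v i = Z *v a" using Zi by (simp add: lie_br_mv a_def)
    have 4: "ip0 v (lie_br Z u) = 3 * inner (lie_br Z u *v i) b"
      using ip0_Tm[OF zg, of i b] vr by simp
    show ?thesis using 1 2 4 zi by simp
  qed
  show ?thesis
  proof (cases "a = 0")
    case True
    then have "u = 0" using ur Tm_zero by simp
    then show ?thesis by (simp add: lie_br_zero_left)
  next
    case False
    have aa: "inner a a > 0" using False by simp
    define c where "c = inner a b / inner a a"
    define b' where "b' = b - c *\<^sub>R a"
    have ab': "inner a b' = 0" using aa by (simp add: b'_def c_def inner_diff_right)
    have b'i: "inner i b' = 0" using ai bi by (simp add: b'_def inner_diff_right)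
    have H: "inner (Mf a b' x) (cross7 i x) = 0" if xi: "inner x i = 0" for x
    proof -
      define Zx where "Zx = Mm x (cross7 i x)"
      have Zg: "Zx \<in> g2" by (simp add: Zx_def Mm_in_g2)
      have "Zx *v i = 0" using xi by (simp add: Zx_def Mf_kill)
      then have Zk: "Zx \<in> k_alg i" using Zg by (simp add: k_iff)
      have "inner (Zx *v a) b = 0" by (rule orth[OF Zk])
      moreover have "inner (Zx *v a) a = 0" by (rule skew_self[OF Zg])
      ultimately have "inner (Zx *v a) b' = 0" by (simp add: b'_def inner_diff_right)
      then have "ip0 (Mm a b') Zx = 0" using TI[OF Zg, of a b'] by simp
      then have "ip0 Zx (Mm a b') = 0" by (simp add: ip0_sym)
      then show ?thesis using TI[OF Mm_in_g2[of a b'], of x "cross7 i x"] by (simp add: Zx_def)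
    qed
    have "inner a a * inner b' b' = 0" by (rule key_G[OF i ai b'i ab' H])
    then have "b' = 0" using aa by simp
    then have "b = c *\<^sub>R a" by (simp add: b'_def)
    then have "v = c *\<^sub>R u" using vr ur by (simp add: Tm_scale)
    then show ?thesis by (simp add: lie_br_scale_self)
  qed
qed

lemma lie_expand:
  "lie_br (s *\<^sub>R P + Q) (s *\<^sub>R R + S) = (s * s) *\<^sub>R lie_br P R + s *\<^sub>R (lie_br P S + lie_br Q R) + lie_br Q S"
  unfolding lie_br_def vec_eq_iff
  by (intro allI) (simp only: comps mm7, algebra)

lemma lie_expand1:
  "lie_br (P + Q) (R + S) = lie_br P R + (lie_br P S + lie_br Q R) + lie_br Q S"
  unfolding lie_br_def vec_eq_iff
  by (intro allI) (simp only: comps mm7, algebra)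

lemma lie_anti: "lie_br X Y = - lie_br Y X"
  by (simp add: lie_br_def)

theorem mainTheorem8:
  fixes i :: "real^7" and t :: real and X Y :: "real^7^7"
  assumes "norm i = 1" and "t > 0" and "X \<in> g2" and "Y \<in> g2"
  shows "(lie_br (phi t i X) (phi t i Y) = 0 \<and> lie_br (proj_k i X) (proj_k i Y) = 0) \<longleftrightarrow>
         (lie_br X Y = 0 \<and> lie_br (proj_p i X) (proj_p i Y) = 0)"
proof -
  have i: "inner i i = 1" using assms(1) by (metis power2_norm_eq_inner one_power2)
  define s where "s = t / (t + 1)"
  have s0: "s > 0" using assms(2) by (simp add: s_def)
  define Xk where "Xk = proj_k i X"
  define Xp where "Xp = proj_p i X"
  define Yk where "Yk = proj_k i Y"
  define Yp where "Yp = proj_p i Y"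
  have Xk: "Xk \<in> k_alg i" using proj_k_k[OF i assms(3)] by (simp add: Xk_def)
  have Yk: "Yk \<in> k_alg i" using proj_k_k[OF i assms(4)] by (simp add: Yk_def)
  have Xp: "Xp \<in> p_alg i" using proj_p_p[OF i assms(3)] by (simp add: Xp_def)
  have Yp: "Yp \<in> p_alg i" using proj_p_p[OF i assms(4)] by (simp add: Yp_def)
  have Xs: "X = Xk + Xp" by (simp add: Xk_def Xp_def proj_p_def)
  have Ys: "Y = Yk + Yp" by (simp add: Yk_def Yp_def proj_p_def)
  have phX: "phi t i X = s *\<^sub>R Xk + Xp" by (simp add: phi_def s_def Xk_def Xp_def)
  have phY: "phi t i Y = s *\<^sub>R Yk + Yp" by (simp add: phi_def s_def Yk_def Yp_def)
  define A where "A = lie_br Xk Yk"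
  define B where "B = lie_br Xk Yp + lie_br Xp Yk"
  define C where "C = lie_br Xp Yp"
  have e1: "lie_br (phi t i X) (phi t i Y) = (s * s) *\<^sub>R A + s *\<^sub>R B + C"
    unfolding phX phY A_def B_def C_def by (rule lie_expand)
  have e2: "lie_br X Y = A + B + C"
    unfolding A_def B_def C_def using lie_expand1[of Xk Xp Yk Yp] Xs Ys by simp
  have Ak: "A \<in> k_alg i" unfolding A_def by (rule k_lie[OF Xk Yk])
  have Bp: "B \<in> p_alg i"
  proof -
    have "lie_br Xk Yp \<in> p_alg i" by (rule kp_lie[OF Xk Yp])
    moreover have "lie_br Xp Yk \<in> p_alg i"
      using p_neg[OF kp_lie[OF Yk Xp]] lie_anti[of Xp Yk] by simp
    ultimately show ?thesis unfolding B_def by (rule p_add)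
  qed
  show ?thesis
  proof
    assume h: "lie_br (phi t i X) (phi t i Y) = 0 \<and> lie_br (proj_k i X) (proj_k i Y) = 0"
    then have A0: "A = 0" by (simp add: A_def Xk_def Yk_def)
    then have "s *\<^sub>R B + C = 0" using h e1 by simp
    then have Ceq: "C = - (s *\<^sub>R B)" by (simp add: eq_neg_iff_add_eq_0 add.commute)
    have Cp: "C \<in> p_alg i" unfolding Ceq by (rule p_neg[OF p_scale[OF Bp]])
    have C0: "C = 0" using key[OF i Xp Yp] Cp unfolding C_def by blast
    then have "s *\<^sub>R B = 0" using Ceq by simp
    then have B0: "B = 0" using s0 by simp
    show "lie_br X Y = 0 \<and> lie_br (proj_p i X) (proj_p i Y) = 0"
      using e2 A0 B0 C0 by (simp add: C_def Xp_def Yp_def)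
  next
    assume h: "lie_br X Y = 0 \<and> lie_br (proj_p i X) (proj_p i Y) = 0"
    then have C0: "C = 0" by (simp add: C_def Xp_def Yp_def)
    then have "A + B = 0" using h e2 by simp
    then have "A = - B" by (simp add: eq_neg_iff_add_eq_0)
    then have "A \<in> p_alg i" using p_neg[OF Bp] by simp
    then have A0: "A = 0" using kp_zero[OF Ak] by simp
    then have B0: "B = 0" using \<open>A + B = 0\<close> by simp
    show "lie_br (phi t i X) (phi t i Y) = 0 \<and> lie_br (proj_k i X) (proj_k i Y) = 0"
      using e1 A0 B0 C0 by (simp add: A_def Xk_def Yk_def)
  qed
qed

end
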